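(* Let $N$ be a finite set with $|N|\ge2$, and let $m_1,m_2:\mathcal{P}(N)\to\mathbb{R}$ generate distinct extreme rays of the cone of standardized supermodular set functions. For $i=1,2$ let $o_i\in\mathbb{R}^{\Upsilon}$ be given by $o_i(a|B)=m_i(\{a\}\cup B)-m_i(B)$ and let $u_i$ be the common value of $\langle o_i,\eta_H\rangle$ over full graphs $H$ over $N$. Then the faces $F_i=\{\eta\in P_N:\langle o_i,\eta\rangle=u_i\}$ of $P_N$ ($i=1,2$) are inclusion-incomparable.
   Context: $\mathrm{DAG}(N)$ is the set of acyclic directed graphs over $N$; $\mathrm{pa}_G(a)$ is the parent set of $a$ in $G$. A full graph is an acyclic directed graph over $N$ in which every pair of distinct nodes is adjacent. $\Upsilon=\{(a|B): a\in N,\ \emptyset\neq B\subseteq N\setminus\{a\}\}$; $\eta_G\in\mathbb{R}^{\Upsilon}$ has $\eta_G(a|B)=1$ if $B=\mathrm{pa}_G(a)$, else $0$; $P_N=\mathrm{conv}\{\eta_G:G\in\mathrm{DAG}(N)\}$. A set function $m$ is standardized if $m(S)=0$ for $|S|\le1$, supermodular if $m(U)+m(V)\le m(U\cup V)+m(U\cap V)$ for all $U,V\subseteq N$. The standardized supermodular functions form a pointed polyhedral cone. (For a standardized supermodular $m$, the inequality $\langle o,\eta\rangle\le u$ so defined is valid on $P_N$ and tight at all full graphs.) *)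

theory Defs
  imports Complex_Main
begin

text \<open>Directed graphs over N are edge sets G \<subseteq> N \<times> N; (b,a) \<in> G means b \<rightarrow> a.\<close>

definition dags :: "'a set \<Rightarrow> ('a \<times> 'a) set set" where
  "dags N = {G. G \<subseteq> N \<times> N \<and> acyclic G}"

definition pa :: "('a \<times> 'a) set \<Rightarrow> 'a \<Rightarrow> 'a set" where
  "pa G a = {b. (b, a) \<in> G}"

definition full_graph :: "'a set \<Rightarrow> ('a \<times> 'a) set \<Rightarrow> bool" where
  "full_graph N G \<longleftrightarrow> G \<in> dags N \<and>
     (\<forall>a\<in>N. \<forall>b\<in>N. a \<noteq> b \<longrightarrow> (a, b) \<in> G \<or> (b, a) \<in> G)"

definition ups :: "'a set \<Rightarrow> ('a \<times> 'a set) set" where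
  "ups N = {(a, B). a \<in> N \<and> B \<noteq> {} \<and> B \<subseteq> N - {a}}"

text \<open>Vectors in R^Upsilon are functions on 'a \<times> 'a set (only values on ups N matter).\<close>
definition eta :: "'a set \<Rightarrow> ('a \<times> 'a) set \<Rightarrow> ('a \<times> 'a set) \<Rightarrow> real" where
  "eta N G p = (if p \<in> ups N \<and> snd p = pa G (fst p) then 1 else 0)"

definition ip :: "'a set \<Rightarrow> ('a \<times> 'a set \<Rightarrow> real) \<Rightarrow> ('a \<times> 'a set \<Rightarrow> real) \<Rightarrow> real" where
  "ip N o' x = (\<Sum>p\<in>ups N. o' p * x p)"

text \<open>P_N = conv {eta_G : G \<in> DAG(N)}, written out as the set of convex combinations
  of the (finitely many) points eta_G.\<close>
definition polytope_P :: "'a set \<Rightarrow> ('a \<times> 'a set \<Rightarrow> real) set" where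
  "polytope_P N = {x. \<exists>l :: ('a \<times> 'a) set \<Rightarrow> real.
      (\<forall>G\<in>dags N. 0 \<le> l G) \<and> (\<Sum>G\<in>dags N. l G) = 1 \<and>
      x = (\<lambda>p. \<Sum>G\<in>dags N. l G * eta N G p)}"

definition standardized :: "'a set \<Rightarrow> ('a set \<Rightarrow> real) \<Rightarrow> bool" where
  "standardized N m \<longleftrightarrow> (\<forall>S\<subseteq>N. card S \<le> 1 \<longrightarrow> m S = 0)"

definition supermodular :: "'a set \<Rightarrow> ('a set \<Rightarrow> real) \<Rightarrow> bool" where
  "supermodular N m \<longleftrightarrow> (\<forall>U\<subseteq>N. \<forall>V\<subseteq>N. m U + m V \<le> m (U \<union> V) + m (U \<inter> V))"

definition std_supermod :: "'a set \<Rightarrow> ('a set \<Rightarrow> real) \<Rightarrow> bool" where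
  "std_supermod N m \<longleftrightarrow> standardized N m \<and> supermodular N m"

definition extreme_ray :: "'a set \<Rightarrow> ('a set \<Rightarrow> real) \<Rightarrow> bool" where
  "extreme_ray N m \<longleftrightarrow> std_supermod N m \<and> (\<exists>S\<subseteq>N. m S \<noteq> 0) \<and>
     (\<forall>m1 m2. std_supermod N m1 \<and> std_supermod N m2 \<and> (\<forall>S\<subseteq>N. m S = m1 S + m2 S)
        \<longrightarrow> (\<exists>c\<ge>0. \<forall>S\<subseteq>N. m1 S = c * m S))"

definition same_ray :: "'a set \<Rightarrow> ('a set \<Rightarrow> real) \<Rightarrow> ('a set \<Rightarrow> real) \<Rightarrow> bool" where
  "same_ray N m1 m2 \<longleftrightarrow> (\<exists>c>0. \<forall>S\<subseteq>N. m1 S = c * m2 S)"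

definition obj :: "('a set \<Rightarrow> real) \<Rightarrow> ('a \<times> 'a set) \<Rightarrow> real" where
  "obj m p = m (insert (fst p) (snd p)) - m (snd p)"

definition face :: "'a set \<Rightarrow> ('a \<times> 'a set \<Rightarrow> real) \<Rightarrow> real \<Rightarrow> ('a \<times> 'a set \<Rightarrow> real) set" where
  "face N o' u = {x \<in> polytope_P N. ip N o' x = u}"

end

theory Submission imports Defs begin

lemma exists_full:
  assumes fin: "finite N" and PN: "P \<subseteq> N" and aN: "a \<in> N" and aP: "a \<notin> P"
  shows "\<exists>H. full_graph N H \<and> pa H a = P"
proof -
  obtain f n where fN: "f ` N = {i::nat. i < n}" and inj: "inj_on f N"
    using finite_imp_inj_to_nat_seg[OF fin] by blast
  have flt: "\<And>x. x \<in> N \<Longrightarrow> f x < n" using fN by blast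
  have npos: "n > 0" using flt[OF aN] by simp
  define cls where "cls x = (if x \<in> P then 0 else if x = a then 1 else (2::nat))" for x
  define r where "r x = cls x * n + f x" for x
  define H where "H = {(x,y). x \<in> N \<and> y \<in> N \<and> r x < r y}"
  have rinj: "x = y" if "x \<in> N" "y \<in> N" "r x = r y" for x y
  proof -
    have "r x div n = cls x" "r x mod n = f x" "r y div n = cls y" "r y mod n = f y"
      using flt[OF that(1)] flt[OF that(2)] npos by (simp_all add: r_def)
    then have "f x = f y" using that(3) by metis
    then show ?thesis using inj that inj_on_def by metis
  qed
  have acyc: "acyclic H"
  proof (rule acyclic_subset[OF wf_acyclic[OF wf_inv_image[OF wf_less_than, of r]]])
    show "H \<subseteq> inv_image less_than r" by (auto simp: H_def)
  qed
  have full: "full_graph N H"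
    unfolding full_graph_def dags_def
  proof (intro conjI ballI impI CollectI)
    show "H \<subseteq> N \<times> N" by (auto simp: H_def)
    show "acyclic H" by (rule acyc)
    fix x y assume "x \<in> N" "y \<in> N" "x \<noteq> y"
    then have "r x \<noteq> r y" using rinj by blast
    then show "(x, y) \<in> H \<or> (y, x) \<in> H" using \<open>x \<in> N\<close> \<open>y \<in> N\<close>
      by (auto simp: H_def)
  qed
  have "pa H a = P"
  proof (intro set_eqI iffI)
    fix x assume "x \<in> pa H a"
    then have x: "x \<in> N" "r x < r a" by (auto simp: pa_def H_def)
    show "x \<in> P"
    proof (rule ccontr)
      assume "x \<notin> P"
      show False
      proof (cases "x = a")
        case True then show False using x by simp
      next
        case False
        then have "r x = 2*n + f x" using \<open>x \<notin> P\<close> by (simp add: r_def cls_def)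
        moreover have "r a = n + f a" using aP by (simp add: r_def cls_def)
        ultimately show False using x flt[OF aN] by linarith
      qed
    qed
  next
    fix x assume "x \<in> P"
    then have "x \<in> N" using PN by blast
    have "r x = f x" using \<open>x \<in> P\<close> by (simp add: r_def cls_def)
    moreover have "r a = n + f a" using aP by (simp add: r_def cls_def)
    ultimately have "r x < r a" using flt[OF \<open>x \<in> N\<close>] by linarith
    then show "x \<in> pa H a" using \<open>x \<in> N\<close> aN by (simp add: pa_def H_def)
  qed
  with full show ?thesis by blast
qed

lemma ip_formula:
  assumes fin: "finite N" and G: "G \<in> dags N" and std: "standardized N m"
  shows "ip N (obj m) (eta N G) = (\<Sum>y\<in>N. obj m (y, pa G y))"
proof -
  have GN: "G \<subseteq> N \<times> N" and ac: "acyclic G" using G by (auto simp: dags_def)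
  have noself: "(y,y) \<notin> G" for y using ac by (auto simp: acyclic_def)
  have paN: "pa G y \<subseteq> N - {y}" for y using GN noself by (auto simp: pa_def)
  have finU: "finite (ups N)"
    by (rule finite_subset[of _ "N \<times> Pow N"]) (auto simp: ups_def fin)
  have "ip N (obj m) (eta N G) = (\<Sum>p\<in>ups N. if snd p = pa G (fst p) then obj m p else 0)"
    unfolding ip_def eta_def by (rule sum.cong) auto
  also have "\<dots> = (\<Sum>p\<in>{p\<in>ups N. snd p = pa G (fst p)}. obj m p)"
    using finU by (simp add: sum.inter_filter)
  also have "\<dots> = (\<Sum>y\<in>{y\<in>N. pa G y \<noteq> {}}. obj m (y, pa G y))"
  proof (rule sum.reindex_bij_witness[of _ "\<lambda>y. (y, pa G y)" fst])
    show "\<And>p. p \<in> {p \<in> ups N. snd p = pa G (fst p)} \<Longrightarrow> (fst p, pa G (fst p)) = p" by auto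
    show "\<And>p. p \<in> {p \<in> ups N. snd p = pa G (fst p)} \<Longrightarrow> fst p \<in> {y \<in> N. pa G y \<noteq> {}}"
      by (auto simp: ups_def)
    show "\<And>y. y \<in> {y \<in> N. pa G y \<noteq> {}} \<Longrightarrow> fst (y, pa G y) = y" by simp
    show "\<And>y. y \<in> {y \<in> N. pa G y \<noteq> {}} \<Longrightarrow> (y, pa G y) \<in> {p \<in> ups N. snd p = pa G (fst p)}"
      using paN by (auto simp: ups_def)
    show "\<And>p. p \<in> {p \<in> ups N. snd p = pa G (fst p)} \<Longrightarrow> obj m (fst p, pa G (fst p)) = obj m p"
      by auto
  qed
  also have "\<dots> = (\<Sum>y\<in>N. obj m (y, pa G y))"
  proof (rule sum.mono_neutral_left[OF fin])
    show "{y \<in> N. pa G y \<noteq> {}} \<subseteq> N" by blast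
    show "\<forall>i\<in>N - {y \<in> N. pa G y \<noteq> {}}. obj m (i, pa G i) = 0"
    proof
      fix i assume "i \<in> N - {y \<in> N. pa G y \<noteq> {}}"
      then have "i \<in> N" "pa G i = {}" by auto
      then show "obj m (i, pa G i) = 0" using std
        by (simp add: obj_def standardized_def)
    qed
  qed
  finally show ?thesis .
qed

lemma elem_supermod:
  assumes fin: "finite N"
    and el: "\<And>P a B. P \<subseteq> N \<Longrightarrow> a \<in> N \<Longrightarrow> a \<notin> P \<Longrightarrow> B \<subseteq> P \<Longrightarrow>
          f (insert a B) + f P \<le> f (insert a P) + (f B :: real)"
  shows "supermodular N f"
  unfolding supermodular_def
proof (intro allI impI)
  fix U V assume UN: "U \<subseteq> N" and VN: "V \<subseteq> N"
  have "\<forall>V. V \<subseteq> N \<longrightarrow> card (V - U) = k \<longrightarrow> f U + f V \<le> f (U \<union> V) + f (U \<inter> V)" for k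
  proof (induction k)
    case 0
    show ?case
    proof (intro allI impI)
      fix V assume "V \<subseteq> N" "card (V - U) = 0"
      then have "V \<subseteq> U" using fin finite_subset by (metis Diff_eq_empty_iff card_0_eq finite_Diff)
      then have "U \<union> V = U" "U \<inter> V = V" by auto
      then show "f U + f V \<le> f (U \<union> V) + f (U \<inter> V)" by simp
    qed
  next
    case (Suc k)
    show ?case
    proof (intro allI impI)
      fix V assume VN: "V \<subseteq> N" and c: "card (V - U) = Suc k"
      then obtain a where a: "a \<in> V - U" by (metis card.empty ex_in_conv nat.distinct(1))
      define V' where "V' = V - {a}"
      have "V' - U = (V - U) - {a}" by (auto simp: V'_def)
      then have "card (V' - U) = k" using c a by simp
      moreover have "V' \<subseteq> N" using VN by (auto simp: V'_def)
      ultimately have IH: "f U + f V' \<le> f (U \<union> V') + f (U \<inter> V')" using Suc.IH by blast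
      have "f (insert a V') + f (U \<union> V') \<le> f (insert a (U \<union> V')) + f V'"
        by (rule el) (use UN VN a in \<open>auto simp: V'_def\<close>)
      moreover have "insert a V' = V" "insert a (U \<union> V') = U \<union> V" "U \<inter> V' = U \<inter> V"
        using a by (auto simp: V'_def)
      ultimately show "f U + f V \<le> f (U \<union> V) + f (U \<inter> V)" using IH by simp
    qed
  qed
  then show "f U + f V \<le> f (U \<union> V) + f (U \<inter> V)" using VN by blast
qed

lemma key:
  assumes fin: "finite N"
    and e1: "extreme_ray N m1" and e2: "extreme_ray N m2"
    and u1: "\<forall>H. full_graph N H \<longrightarrow> ip N (obj m1) (eta N H) = u1"
    and u2: "\<forall>H. full_graph N H \<longrightarrow> ip N (obj m2) (eta N H) = u2"
    and sub: "face N (obj m1) u1 \<subseteq> face N (obj m2) u2"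
  shows "same_ray N m1 m2"
proof -
  have s1: "standardized N m1" "supermodular N m1" and s2: "standardized N m2" "supermodular N m2"
    using e1 e2 by (auto simp: extreme_ray_def std_supermod_def)
  define T where "T = {(P,a,B). P \<subseteq> N \<and> a \<in> N \<and> a \<notin> P \<and> B \<subseteq> P}"
  define ee where "ee m t = (case t of (P,a,B) \<Rightarrow> m (insert a P) + m B - m (insert a B) - m P)"
    for m :: "'a set \<Rightarrow> real" and t :: "'a set \<times> 'a \<times> 'a set"
  have finT: "finite T"
    by (rule finite_subset[of _ "Pow N \<times> N \<times> Pow N"]) (auto simp: T_def fin)
  have nonneg: "ee m t \<ge> 0" if "supermodular N m" "t \<in> T" for m t
  proof -
    obtain P a B where t: "t = (P,a,B)" "P \<subseteq> N" "a \<in> N" "a \<notin> P" "B \<subseteq> P"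
      using \<open>t \<in> T\<close> by (auto simp: T_def)
    have "insert a B \<subseteq> N" using t by auto
    then have "m P + m (insert a B) \<le> m (P \<union> insert a B) + m (P \<inter> insert a B)"
      using that(1) t(2) unfolding supermodular_def by blast
    moreover have "P \<union> insert a B = insert a P" "P \<inter> insert a B = B" using t by auto
    ultimately show ?thesis using t by (simp add: ee_def)
  qed
  have transfer: "ee m2 t = 0" if "t \<in> T" "ee m1 t = 0" for t
  proof -
    obtain P a B where t: "t = (P,a,B)" "P \<subseteq> N" "a \<in> N" "a \<notin> P" "B \<subseteq> P"
      using \<open>t \<in> T\<close> by (auto simp: T_def)
    obtain H where H: "full_graph N H" "pa H a = P" using exists_full[OF fin t(2-4)] by blast
    have HD: "H \<in> dags N" using H by (simp add: full_graph_def)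
    define G where "G = H - {(x,a) | x. x \<in> P - B}"
    have GD: "G \<in> dags N" using HD by (auto simp: dags_def G_def intro: acyclic_subset)
    have paGa: "pa G a = B" using H t by (auto simp: pa_def G_def)
    have paGy: "pa G y = pa H y" if "y \<noteq> a" for y using that by (auto simp: pa_def G_def)
    have diff: "ip N (obj m) (eta N H) - ip N (obj m) (eta N G) = ee m t"
      if "standardized N m" for m
    proof -
      have "ip N (obj m) (eta N H) - ip N (obj m) (eta N G)
          = (\<Sum>y\<in>N. obj m (y, pa H y)) - (\<Sum>y\<in>N. obj m (y, pa G y))"
        using ip_formula[OF fin HD that] ip_formula[OF fin GD that] by simp
      also have "\<dots> = obj m (a, pa H a) - obj m (a, pa G a)"
      proof -
        have "(\<Sum>y\<in>N. obj m (y, pa H y)) = obj m (a, pa H a) + (\<Sum>y\<in>N-{a}. obj m (y, pa H y))"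
          using fin t(3) by (simp add: sum.remove)
        moreover have "(\<Sum>y\<in>N. obj m (y, pa G y)) = obj m (a, pa G a) + (\<Sum>y\<in>N-{a}. obj m (y, pa G y))"
          using fin t(3) by (simp add: sum.remove)
        moreover have "(\<Sum>y\<in>N-{a}. obj m (y, pa G y)) = (\<Sum>y\<in>N-{a}. obj m (y, pa H y))"
          using paGy by (intro sum.cong) auto
        ultimately show ?thesis by simp
      qed
      also have "\<dots> = ee m t" using H(2) paGa t(1) by (simp add: obj_def ee_def)
      finally show ?thesis .
    qed
    have etaP: "eta N G \<in> polytope_P N"
    proof -
      have finD: "finite (dags N)"
        by (rule finite_subset[of _ "Pow (N \<times> N)"]) (auto simp: dags_def fin)
      define l where "l G' = (if G' = G then 1 else (0::real))" for G'
      have "(\<Sum>G'\<in>dags N. l G') = 1" using finD GD by (simp add: l_def)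
      moreover have "eta N G = (\<lambda>p. \<Sum>G'\<in>dags N. l G' * eta N G' p)"
      proof
        fix p
        have "(\<Sum>G'\<in>dags N. l G' * eta N G' p) = (\<Sum>G'\<in>dags N. if G' = G then eta N G p else 0)"
          by (rule sum.cong) (auto simp: l_def)
        also have "\<dots> = eta N G p" using finD GD by simp
        finally show "eta N G p = (\<Sum>G'\<in>dags N. l G' * eta N G' p)" by simp
      qed
      ultimately show ?thesis unfolding polytope_P_def l_def by (intro CollectI exI[of _ l]) (auto simp: l_def)
    qed
    have "ip N (obj m1) (eta N G) = u1" using diff[OF s1(1)] that(2) u1 H(1) by simp
    then have "eta N G \<in> face N (obj m1) u1" using etaP by (simp add: face_def)
    then have "eta N G \<in> face N (obj m2) u2" using sub by blast
    then have "ip N (obj m2) (eta N G) = u2" by (simp add: face_def)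
    then show ?thesis using diff[OF s2(1)] u2 H(1) by simp
  qed
  define E where "E = (\<lambda>t. ee m1 t / ee m2 t) ` {t\<in>T. ee m2 t > 0}"
  define eps where "eps = Min (insert 1 E)"
  have finE: "finite E" using finT by (simp add: E_def)
  have Epos: "\<forall>x\<in>E. x > 0"
  proof
    fix x assume "x \<in> E"
    then obtain t where t: "t \<in> T" "ee m2 t > 0" "x = ee m1 t / ee m2 t" by (auto simp: E_def)
    have "ee m1 t \<noteq> 0" using transfer t by fastforce
    then have "ee m1 t > 0" using nonneg[OF s1(2) t(1)] by simp
    then show "x > 0" using t by simp
  qed
  have epos: "eps > 0" unfolding eps_def using finE Epos by (subst Min_gr_iff) auto
  have ele: "eps \<le> ee m1 t / ee m2 t" if "t \<in> T" "ee m2 t > 0" for t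
    unfolding eps_def using finE that by (intro Min_le) (auto simp: E_def)
  define m where "m S = m1 S - eps * m2 S" for S
  have m_std: "std_supermod N m"
    unfolding std_supermod_def
  proof
    show "standardized N m" using s1(1) s2(1) by (simp add: standardized_def m_def)
    show "supermodular N m"
    proof (rule elem_supermod[OF fin])
      fix P a B assume h: "P \<subseteq> N" "a \<in> N" "a \<notin> P" "B \<subseteq> P"
      then have tT: "(P,a,B) \<in> T" by (simp add: T_def)
      have "eps * ee m2 (P,a,B) \<le> ee m1 (P,a,B)"
      proof (cases "ee m2 (P,a,B) > 0")
        case True
        then show ?thesis using ele[OF tT True] by (simp add: pos_le_divide_eq mult.commute)
      next
        case False
        then have "ee m2 (P,a,B) = 0" using nonneg[OF s2(2) tT] by simp
        then show ?thesis using nonneg[OF s1(2) tT] by simp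
      qed
      then show "m (insert a B) + m P \<le> m (insert a P) + m B"
        by (simp add: ee_def m_def algebra_simps)
    qed
  qed
  have em2_std: "std_supermod N (\<lambda>S. eps * m2 S)"
    using s2 epos unfolding std_supermod_def standardized_def supermodular_def
    by (auto simp flip: distrib_left intro: mult_left_mono)
  have "\<exists>c\<ge>0. \<forall>S\<subseteq>N. eps * m2 S = c * m1 S"
    using e1 em2_std m_std unfolding extreme_ray_def
    by (elim conjE allE[of _ "\<lambda>S. eps * m2 S"] allE[of _ m]) (auto simp: m_def)
  then obtain c where c: "c \<ge> 0" "\<forall>S\<subseteq>N. eps * m2 S = c * m1 S" by blast
  obtain S0 where S0: "S0 \<subseteq> N" "m2 S0 \<noteq> 0" using e2 by (auto simp: extreme_ray_def)
  have "c \<noteq> 0" using c(2) S0 epos by force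
  then have "c > 0" using c(1) by simp
  have "\<forall>S\<subseteq>N. m1 S = (eps / c) * m2 S" using c(2) \<open>c > 0\<close> by (auto simp: field_simps)
  then show ?thesis unfolding same_ray_def using epos \<open>c > 0\<close> by (intro exI[of _ "eps/c"]) auto
qed

lemma same_ray_sym: "same_ray N m1 m2 \<Longrightarrow> same_ray N m2 m1"
  unfolding same_ray_def
proof -
  assume "\<exists>c>0. \<forall>S\<subseteq>N. m1 S = c * m2 S"
  then obtain c where "c > 0" "\<forall>S\<subseteq>N. m1 S = c * m2 S" by blast
  then show "\<exists>c>0. \<forall>S\<subseteq>N. m2 S = c * m1 S" by (intro exI[of _ "1/c"]) auto
qed

theorem lemma8:
  fixes N :: "'a set" and m1 m2 :: "'a set \<Rightarrow> real" and u1 u2 :: real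
  assumes "finite N" and "card N \<ge> 2"
    and "extreme_ray N m1" and "extreme_ray N m2"
    and "\<not> same_ray N m1 m2"
    and "\<forall>H. full_graph N H \<longrightarrow> ip N (obj m1) (eta N H) = u1"
    and "\<forall>H. full_graph N H \<longrightarrow> ip N (obj m2) (eta N H) = u2"
  shows "\<not> face N (obj m1) u1 \<subseteq> face N (obj m2) u2 \<and>
         \<not> face N (obj m2) u2 \<subseteq> face N (obj m1) u1"
  using key[OF assms(1,3,4,6,7)] key[OF assms(1,4,3,7,6)] assms(5) same_ray_sym by blast

end
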